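(* Let $I$ be an index set of non-measurable cardinality and $H$ the group $\mathbb Z^{(I)}$ with the topology of pointwise convergence on $\mathbb Z^I$. Let $\bar t\in\mathbb T^I$ and suppose there is an infinite set $J\subseteq I$ such that $\bar t(i)$ is irrational for every $i\in J$ and the set $\{\bar t(i):i\in J\}$ is linearly independent over $\mathbb Q$. Then $\bar t\notin\widehat H$.
   Context: $\mathbb Z^{(I)}$ is the group of finitely supported functions $I\to\mathbb Z$, paired with $\mathbb Z^I$ by $\langle\bar g,\bar x\rangle=\sum_i\bar g(i)\bar x(i)$; $H$ carries the weakest topology making all maps $\bar g\mapsto\langle\bar g,\bar x\rangle\in\mathbb Z$ ($\mathbb Z$ discrete) continuous. $\mathbb T=\mathbb R/\mathbb Z$ is identified with $(-1/2,1/2]$ with addition mod $1$, so elements of $\mathbb T$ are regarded as real numbers. An element $\bar t\in\mathbb T^I$ is identified with the homomorphism $H\to\mathbb T$, $\bar g\mapsto\sum_i\bar g(i)\bar t(i)$, and $\widehat H$ (continuous homomorphisms $H\to\mathbb T$) is thereby a subgroup of $\mathbb T^I$. *)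

theory Defs
  imports "HOL-Analysis.Analysis"
begin

text \<open>Ulam-measurable cardinality: there is a countably complete non-principal
  ultrafilter on the set I (equivalently a non-trivial two-valued countably additive
  measure on all subsets of I vanishing on singletons).\<close>
definition measurable_cardinality :: "'i set \<Rightarrow> bool" where
  "measurable_cardinality I \<longleftrightarrow>
     (\<exists>U. U \<subseteq> Pow I \<and> I \<in> U \<and> {} \<notin> U
        \<and> (\<forall>A B. A \<in> U \<and> A \<subseteq> B \<and> B \<subseteq> I \<longrightarrow> B \<in> U)
        \<and> (\<forall>A. A \<subseteq> I \<longrightarrow> A \<in> U \<or> I - A \<in> U)
        \<and> (\<forall>C. countable C \<and> C \<noteq> {} \<and> C \<subseteq> U \<longrightarrow> \<Inter>C \<in> U)
        \<and> (\<forall>i\<in>I. {i} \<notin> U))"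

definition fin_supp :: "'i set \<Rightarrow> ('i \<Rightarrow> int) set" where
  "fin_supp I = {g. finite {i. g i \<noteq> 0} \<and> (\<forall>i. i \<notin> I \<longrightarrow> g i = 0)}"

definition pairing :: "('i \<Rightarrow> int) \<Rightarrow> ('i \<Rightarrow> int) \<Rightarrow> int" where
  "pairing g x = (\<Sum>i\<in>{i. g i \<noteq> 0}. g i * x i)"

text \<open>Weakest topology on H making all g |-> <g,x> (x in Z^I) continuous into discrete Z:
  generated by the preimages of singletons.\<close>
definition H_topology :: "'i set \<Rightarrow> ('i \<Rightarrow> int) topology" where
  "H_topology I = topology_generated_by
     {{g \<in> fin_supp I. pairing g x = n} | x n. \<forall>i. i \<notin> I \<longrightarrow> x i = 0}"

text \<open>T = R/Z represented by (-1/2,1/2]; reduction map R -> T.\<close>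
definition Tset :: "real set" where "Tset = {-1/2<..1/2}"

definition tred :: "real \<Rightarrow> real" where
  "tred r = r - real_of_int \<lceil>r - 1/2\<rceil>"

text \<open>Quotient topology on T: U \<subseteq> T open iff its preimage in R is open.
  (This family is already a topology; generating from it changes nothing.)\<close>
definition T_topology :: "real topology" where
  "T_topology = topology_generated_by {U. U \<subseteq> Tset \<and> open (tred -` U)}"

text \<open>An element t of T^I viewed as the homomorphism H -> T, g |-> sum g(i) t(i).\<close>
definition char_of :: "('i \<Rightarrow> real) \<Rightarrow> ('i \<Rightarrow> int) \<Rightarrow> real" where
  "char_of t g = tred (\<Sum>i\<in>{i. g i \<noteq> 0}. real_of_int (g i) * t i)"

definition dual_group :: "'i set \<Rightarrow> ('i \<Rightarrow> real) set" where
  "dual_group I = {t. (\<forall>i\<in>I. t i \<in> Tset) \<and> (\<forall>i. i \<notin> I \<longrightarrow> t i = 0)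
                      \<and> continuous_map (H_topology I) T_topology (char_of t)}"

end

theory Submission
  imports Defs
begin

definition sv :: "('i \<Rightarrow> real) \<Rightarrow> ('i \<Rightarrow> int) \<Rightarrow> real" where
  "sv t g = (\<Sum>i\<in>{i. g i \<noteq> 0}. real_of_int (g i) * t i)"

lemma sv_eq:
  assumes "finite S" "{i. g i \<noteq> 0} \<subseteq> S"
  shows "sv t g = (\<Sum>i\<in>S. real_of_int (g i) * t i)"
  unfolding sv_def by (rule sum.mono_neutral_left) (use assms in auto)

lemma pairing_eq:
  assumes "finite S" "{i. g i \<noteq> 0} \<subseteq> S"
  shows "pairing g x = (\<Sum>i\<in>S. g i * x i)"
  unfolding pairing_def by (rule sum.mono_neutral_left) (use assms in auto)

lemma lin_comb:
  assumes "g \<in> fin_supp I" "h \<in> fin_supp I"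
  shows "(\<lambda>i. a * g i - b * h i) \<in> fin_supp I"
    and "pairing (\<lambda>i. a * g i - b * h i) x = a * pairing g x - b * pairing h x"
    and "sv t (\<lambda>i. a * g i - b * h i) = a * sv t g - b * sv t h"
proof -
  let ?S = "{i. g i \<noteq> 0} \<union> {i. h i \<noteq> 0}"
  have fin: "finite ?S" using assms by (auto simp: fin_supp_def)
  have sub: "{i. a * g i - b * h i \<noteq> 0} \<subseteq> ?S" by auto
  show "(\<lambda>i. a * g i - b * h i) \<in> fin_supp I"
    using assms fin sub unfolding fin_supp_def by (auto intro: finite_subset)
  have "pairing (\<lambda>i. a * g i - b * h i) x = (\<Sum>i\<in>?S. (a * g i - b * h i) * x i)"
    by (rule pairing_eq[OF fin sub])
  also have "\<dots> = (\<Sum>i\<in>?S. a * (g i * x i) - b * (h i * x i))"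
    by (rule sum.cong) (simp_all add: left_diff_distrib mult.assoc)
  also have "\<dots> = a * (\<Sum>i\<in>?S. g i * x i) - b * (\<Sum>i\<in>?S. h i * x i)"
    by (simp only: sum_subtractf sum_distrib_left)
  also have "\<dots> = a * pairing g x - b * pairing h x"
    using pairing_eq[OF fin, of g] pairing_eq[OF fin, of h] by simp
  finally show "pairing (\<lambda>i. a * g i - b * h i) x = a * pairing g x - b * pairing h x" .
  have "sv t (\<lambda>i. a * g i - b * h i) = (\<Sum>i\<in>?S. real_of_int (a * g i - b * h i) * t i)"
    by (rule sv_eq[OF fin sub])
  also have "\<dots> = (\<Sum>i\<in>?S. a * (real_of_int (g i) * t i) - b * (real_of_int (h i) * t i))"
    by (rule sum.cong) (simp_all add: left_diff_distrib mult.assoc)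
  also have "\<dots> = a * (\<Sum>i\<in>?S. real_of_int (g i) * t i) - b * (\<Sum>i\<in>?S. real_of_int (h i) * t i)"
    by (simp only: sum_subtractf sum_distrib_left)
  also have "\<dots> = a * sv t g - b * sv t h"
    using sv_eq[OF fin, of g] sv_eq[OF fin, of h] by simp
  finally show "sv t (\<lambda>i. a * g i - b * h i) = a * sv t g - b * sv t h" .
qed

lemma tred_id: "-1/2 < y \<Longrightarrow> y \<le> 1/2 \<Longrightarrow> tred y = y"
  unfolding tred_def by (simp add: ceiling_eq_iff)

lemma tred_shift: "tred (y + of_int k) = tred y"
proof -
  have "\<lceil>y + of_int k - 1/2\<rceil> = \<lceil>(y - 1/2) + of_int k\<rceil>" by (simp add: algebra_simps)
  also have "\<dots> = \<lceil>y - 1/2\<rceil> + k" by (rule ceiling_add_of_int)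
  finally show ?thesis unfolding tred_def by simp
qed

lemma tred_int:
  assumes "y \<in> \<int>" shows "tred y = 0"
proof -
  obtain z where "y = of_int z" using assms by (auto elim: Ints_cases)
  then have "tred y = tred (0 + of_int z)" by simp
  also have "\<dots> = tred 0" by (rule tred_shift)
  also have "\<dots> = 0" by (rule tred_id) auto
  finally show ?thesis .
qed

lemma tred_range: "-1/2 < tred y \<and> tred y \<le> 1/2"
proof -
  have "y - 1/2 \<le> of_int \<lceil>y - 1/2\<rceil>" by (rule le_of_int_ceiling)
  moreover have "of_int \<lceil>y - 1/2\<rceil> < y - 1/2 + 1" using ceiling_correct[of "y - 1/2"] by linarith
  ultimately show ?thesis unfolding tred_def by linarith
qed

lemma tred_decomp: "\<exists>z. y = tred y + of_int z"
  unfolding tred_def by (rule exI[of _ "\<lceil>y - 1/2\<rceil>"]) simp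

lemma exists_far:
  assumes "r \<notin> \<int>"
  shows "\<exists>m::int. \<not> \<bar>tred (of_int m * r)\<bar> < 1/4"
proof -
  define f where "f = tred r"
  obtain z where rz: "r = f + of_int z" unfolding f_def using tred_decomp by blast
  have fr: "-1/2 < f" "f \<le> 1/2" using tred_range f_def by auto
  have f0: "f \<noteq> 0" using assms rz by auto
  show ?thesis
  proof (cases "\<bar>f\<bar> < 1/4")
    case False
    then show ?thesis by (intro exI[of _ 1]) (simp add: f_def)
  next
    case True
    define k where "k = \<lceil>1 / (4 * \<bar>f\<bar>)\<rceil>"
    have fpos: "\<bar>f\<bar> > 0" using f0 by simp
    have k1: "1 / (4 * \<bar>f\<bar>) \<le> of_int k" unfolding k_def by (rule le_of_int_ceiling)
    have k2: "of_int k < 1 / (4 * \<bar>f\<bar>) + 1" unfolding k_def using ceiling_correct[of "1 / (4 * \<bar>f\<bar>)"] by linarith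
    have A: "1/4 \<le> of_int k * \<bar>f\<bar>" using k1 fpos by (simp add: field_simps)
    have B: "of_int k * \<bar>f\<bar> < 1/4 + \<bar>f\<bar>" using k2 fpos by (simp add: field_simps)
    define m where "m = (if f > 0 then k else -k)"
    have mf: "of_int m * f = of_int k * \<bar>f\<bar>" unfolding m_def by auto
    have "of_int m * r = of_int k * \<bar>f\<bar> + of_int (m * z)" using rz mf by (simp add: algebra_simps)
    then have "tred (of_int m * r) = tred (of_int k * \<bar>f\<bar>)" by (simp only: tred_shift)
    also have "\<dots> = of_int k * \<bar>f\<bar>" using A B True by (intro tred_id) auto
    finally show ?thesis using A by (intro exI[of _ m]) simp
  qed
qed

lemma nbhd:
  assumes "generate_topology_on S U" "g0 \<in> U"
    and "S = {{g \<in> fin_supp I. pairing g x = n} | x n. \<forall>i. i \<notin> I \<longrightarrow> x i = 0}"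
  shows "\<exists>X. finite X \<and> {g \<in> fin_supp I. \<forall>x\<in>X. pairing g x = pairing g0 x} \<subseteq> U"
  using assms
proof (induction arbitrary: g0 rule: generate_topology_on.induct)
  case Empty
  then show ?case by simp
next
  case (Int a b)
  then obtain X1 X2 where "finite X1" "{g \<in> fin_supp I. \<forall>x\<in>X1. pairing g x = pairing g0 x} \<subseteq> a"
    "finite X2" "{g \<in> fin_supp I. \<forall>x\<in>X2. pairing g x = pairing g0 x} \<subseteq> b" by blast
  then show ?case by (intro exI[of _ "X1 \<union> X2"]) auto
next
  case (UN K)
  then obtain k where "k \<in> K" "g0 \<in> k" by blast
  with UN obtain X where "finite X" "{g \<in> fin_supp I. \<forall>x\<in>X. pairing g x = pairing g0 x} \<subseteq> k" by blast
  then show ?case using \<open>k \<in> K\<close> by (intro exI[of _ X]) auto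
next
  case (Basis s)
  then obtain x n where s: "s = {g \<in> fin_supp I. pairing g x = n}" by blast
  with Basis have "pairing g0 x = n" by blast
  then show ?case using s by (intro exI[of _ "{x}"]) auto
qed

lemma rat_module: "module (\<lambda>(q::rat) (x::real). of_rat q * x)"
  by unfold_locales (simp_all add: algebra_simps of_rat_add of_rat_mult)

lemma base_case:
  assumes "J \<subseteq> I" "infinite J" "inj_on t J"
    and ind: "\<not> module.dependent (\<lambda>(q::rat) (x::real). of_rat q * x) (t ` J)"
  shows "\<exists>G S. finite S \<and> card S = n \<and> (\<forall>k\<in>S. G k \<in> fin_supp I) \<and>
     (\<forall>c::nat\<Rightarrow>int. (\<Sum>k\<in>S. of_int (c k) * sv t (G k)) = 0 \<longrightarrow> (\<forall>k\<in>S. c k = 0))"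
proof -
  obtain f :: "nat \<Rightarrow> _" where f: "inj f" "range f \<subseteq> J" using infinite_countable_subset[OF assms(2)] by blast
  define G where "G k = (\<lambda>i. if i = f k then 1 else 0::int)" for k
  have supp: "{i. G k i \<noteq> 0} = {f k}" for k unfolding G_def by auto
  have GI: "G k \<in> fin_supp I" for k using f assms(1) unfolding fin_supp_def supp by (auto simp: G_def)
  have svG: "sv t (G k) = t (f k)" for k using sv_eq[of "{f k}" "G k" t] supp by (simp add: G_def)
  have injtf: "inj_on (t \<circ> f) {..<n}"
  proof (rule inj_onI)
    fix a b assume "a \<in> {..<n}" "b \<in> {..<n}" "(t \<circ> f) a = (t \<circ> f) b"
    moreover have "f a \<in> J" "f b \<in> J" using f by auto
    ultimately have "f a = f b" using assms(3) by (auto dest: inj_onD)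
    then show "a = b" using f(1) by (auto dest: injD)
  qed
  have "\<forall>k\<in>{..<n}. c k = 0" if c: "(\<Sum>k\<in>{..<n}. of_int (c k) * sv t (G k)) = 0" for c :: "nat \<Rightarrow> int"
  proof -
    define T where "T = (t \<circ> f) ` {..<n}"
    define u :: "real \<Rightarrow> rat" where "u v = of_int (c (the_inv_into {..<n} (t \<circ> f) v))" for v
    have uk: "u ((t \<circ> f) k) = of_int (c k)" if "k < n" for k
      unfolding u_def using the_inv_into_f_f[OF injtf] that by simp
    have "(\<Sum>v\<in>T. of_rat (u v) * v) = (\<Sum>k\<in>{..<n}. of_rat (u ((t \<circ> f) k)) * (t \<circ> f) k)"
      using sum.reindex[OF injtf, of "\<lambda>v. of_rat (u v) * v"] unfolding T_def by simp
    also have "\<dots> = (\<Sum>k\<in>{..<n}. of_int (c k) * sv t (G k))"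
      by (rule sum.cong) (auto simp: uk[unfolded comp_def] svG)
    finally have z: "(\<Sum>v\<in>T. of_rat (u v) * v) = 0" using c by simp
    have "T \<subseteq> t ` J" unfolding T_def using f by auto
    then have "\<forall>v\<in>T. u v = 0" using ind z module.dependent_explicit[OF rat_module] unfolding T_def by blast
    then show ?thesis using uk unfolding T_def by fastforce
  qed
  then show ?thesis using GI by (intro exI[of _ G] exI[of _ "{..<n}"]) auto
qed

definition indep_fam :: "('i \<Rightarrow> real) \<Rightarrow> (nat \<Rightarrow> 'i \<Rightarrow> int) \<Rightarrow> nat set \<Rightarrow> bool" where
  "indep_fam t G S \<longleftrightarrow>
     (\<forall>c::nat\<Rightarrow>int. (\<Sum>k\<in>S. of_int (c k) * sv t (G k)) = 0 \<longrightarrow> (\<forall>k\<in>S. c k = 0))"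

lemma indep_claim:
  assumes "J \<subseteq> I" "infinite J" "inj_on t J"
    and ind: "\<not> module.dependent (\<lambda>(q::rat) (x::real). of_rat q * x) (t ` J)"
    and "finite X"
  shows "\<exists>G S. finite S \<and> card S = n \<and> (\<forall>k\<in>S. G k \<in> fin_supp I \<and> (\<forall>x\<in>X. pairing (G k) x = 0))
     \<and> indep_fam t G S"
  using \<open>finite X\<close>
proof (induction X arbitrary: n rule: finite_induct)
  case empty
  show ?case using base_case[OF assms(1-4), of n] unfolding indep_fam_def by auto
next
  case (insert x X)
  obtain G S where S: "finite S" "card S = Suc n"
    and G: "\<forall>k\<in>S. G k \<in> fin_supp I \<and> (\<forall>x\<in>X. pairing (G k) x = 0)"
    and IG: "indep_fam t G S"
    using insert.IH[of "Suc n"] by blast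
  define a where "a k = pairing (G k) x" for k
  show ?case
  proof (cases "\<forall>k\<in>S. a k = 0")
    case True
    obtain e where e: "e \<in> S" using S by (metis card.empty ex_in_conv nat.distinct(1))
    define S' where "S' = S - {e}"
    have "indep_fam t G S'"
      unfolding indep_fam_def
    proof (intro allI impI)
      fix c :: "nat \<Rightarrow> int"
      assume c: "(\<Sum>k\<in>S'. of_int (c k) * sv t (G k)) = 0"
      define c' where "c' = c(e := 0)"
      have "(\<Sum>k\<in>S. of_int (c' k) * sv t (G k)) = of_int (c' e) * sv t (G e) + (\<Sum>k\<in>S'. of_int (c' k) * sv t (G k))"
        unfolding S'_def using S(1) e by (rule sum.remove)
      also have "(\<Sum>k\<in>S'. of_int (c' k) * sv t (G k)) = (\<Sum>k\<in>S'. of_int (c k) * sv t (G k))"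
        by (rule sum.cong) (auto simp: c'_def S'_def)
      finally have "(\<Sum>k\<in>S. of_int (c' k) * sv t (G k)) = 0" using c by (simp add: c'_def)
      then have z: "\<forall>k\<in>S. c' k = 0" using IG unfolding indep_fam_def by blast
      show "\<forall>k\<in>S'. c k = 0"
      proof
        fix k assume "k \<in> S'"
        then have "k \<in> S" "k \<noteq> e" by (auto simp: S'_def)
        then show "c k = 0" using z by (metis c'_def fun_upd_other)
      qed
    qed
    moreover have "finite S'" "card S' = n" using S e by (auto simp: S'_def)
    ultimately show ?thesis using G True by (intro exI[of _ G] exI[of _ S']) (auto simp: S'_def a_def)
  next
    case False
    then obtain j where j: "j \<in> S" "a j \<noteq> 0" by blast
    define S' where "S' = S - {j}"
    define G' where "G' k = (\<lambda>i. a j * G k i - a k * G j i)" for k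
    have G'1: "G' k \<in> fin_supp I" if "k \<in> S" for k
      unfolding G'_def using lin_comb(1) G that j by blast
    have G'2: "pairing (G' k) y = a j * pairing (G k) y - a k * pairing (G j) y" if "k \<in> S" for k y
      unfolding G'_def using lin_comb(2) G that j by blast
    have G'3: "sv t (G' k) = of_int (a j) * sv t (G k) - of_int (a k) * sv t (G j)" if "k \<in> S" for k
      unfolding G'_def using lin_comb(3) G that j by blast
    have "indep_fam t G' S'"
      unfolding indep_fam_def
    proof (intro allI impI)
      fix c :: "nat \<Rightarrow> int"
      assume c: "(\<Sum>k\<in>S'. of_int (c k) * sv t (G' k)) = 0"
      define d where "d k = (if k = j then - (\<Sum>k\<in>S'. c k * a k) else c k * a j)" for k
      have "(\<Sum>k\<in>S. of_int (d k) * sv t (G k)) = of_int (d j) * sv t (G j) + (\<Sum>k\<in>S'. of_int (d k) * sv t (G k))"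
        unfolding S'_def using S(1) j(1) by (rule sum.remove)
      also have "(\<Sum>k\<in>S'. of_int (d k) * sv t (G k)) = (\<Sum>k\<in>S'. of_int (c k) * of_int (a j) * sv t (G k))"
        by (rule sum.cong) (auto simp: d_def S'_def)
      also have "of_int (d j) * sv t (G j) = - (\<Sum>k\<in>S'. of_int (c k) * of_int (a k) * sv t (G j))"
        by (simp add: d_def sum_distrib_right)
      finally have "(\<Sum>k\<in>S. of_int (d k) * sv t (G k)) =
          (\<Sum>k\<in>S'. of_int (c k) * of_int (a j) * sv t (G k)) - (\<Sum>k\<in>S'. of_int (c k) * of_int (a k) * sv t (G j))"
        by simp
      also have "\<dots> = (\<Sum>k\<in>S'. of_int (c k) * (of_int (a j) * sv t (G k) - of_int (a k) * sv t (G j)))"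
        by (simp add: sum_subtractf[symmetric] right_diff_distrib mult.assoc)
      also have "\<dots> = (\<Sum>k\<in>S'. of_int (c k) * sv t (G' k))"
        by (rule sum.cong) (auto simp: G'3 S'_def)
      finally have "(\<Sum>k\<in>S. of_int (d k) * sv t (G k)) = 0" using c by simp
      then have z: "\<forall>k\<in>S. d k = 0" using IG unfolding indep_fam_def by blast
      show "\<forall>k\<in>S'. c k = 0"
      proof
        fix k assume "k \<in> S'"
        then have "k \<in> S" "k \<noteq> j" by (auto simp: S'_def)
        then have "c k * a j = 0" using z unfolding d_def by metis
        then show "c k = 0" using j(2) by simp
      qed
    qed
    moreover have "finite S'" "card S' = n" using S j by (auto simp: S'_def)
    moreover have "\<forall>k\<in>S'. G' k \<in> fin_supp I \<and> (\<forall>y\<in>insert x X. pairing (G' k) y = 0)"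
      using G'1 G'2 G j by (auto simp: S'_def a_def)
    ultimately show ?thesis by (intro exI[of _ G'] exI[of _ S']) auto
  qed
qed

lemma char_of_sv: "char_of t g = tred (sv t g)"
  unfolding char_of_def sv_def by simp

lemma pairing_zero: "pairing (\<lambda>i. 0) x = 0" "pairing g (\<lambda>i. 0) = 0"
  unfolding pairing_def by simp_all

lemma tred_preimage: "tred -` {-1/4<..<1/4} = (\<Union>k::int. ball (of_int k) (1/4))"
proof (intro set_eqI iffI)
  fix y assume "y \<in> tred -` {-1/4<..<1/4}"
  then have "\<bar>tred y\<bar> < 1/4" by auto
  moreover obtain z where "y = tred y + of_int z" using tred_decomp by blast
  then have "of_int z - y = - tred y" by linarith
  ultimately have "y \<in> ball (of_int z) (1/4)" by (simp add: dist_real_def)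
  then show "y \<in> (\<Union>k::int. ball (of_int k) (1/4))" by blast
next
  fix y :: real assume "y \<in> (\<Union>k::int. ball (of_int k) (1/4))"
  then obtain k :: int where k: "\<bar>of_int k - y\<bar> < (1/4::real)" by (auto simp: dist_real_def)
  have h: "-1/4 < y - of_int k" "y - of_int k < 1/4" using k by arith+
  have "tred y = tred ((y - of_int k) + of_int k)" by simp
  also have "\<dots> = tred (y - of_int k)" by (rule tred_shift)
  also have "\<dots> = y - of_int k" by (rule tred_id) (use h in linarith)+
  finally have "tred y = y - of_int k" .
  then show "y \<in> tred -` {-1/4<..<1/4}" using h by simp
qed

theorem lemma4p13:
  fixes I J :: "'i set" and t :: "'i \<Rightarrow> real"
  assumes "\<not> measurable_cardinality I"
    and "\<forall>i\<in>I. t i \<in> Tset" and "\<forall>i. i \<notin> I \<longrightarrow> t i = 0"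
    and "J \<subseteq> I" and "infinite J"
    and "\<forall>i\<in>J. t i \<notin> \<rat>"
    and "inj_on t J"
    and "\<not> module.dependent (\<lambda>(q::rat) (x::real). of_rat q * x) (t ` J)"
  shows "t \<notin> dual_group I"
proof
  assume "t \<in> dual_group I"
  then have cont: "continuous_map (H_topology I) T_topology (char_of t)" by (simp add: dual_group_def)
  define V where "V = {-1/4<..<1/4::real}"
  have "openin T_topology V"
    unfolding T_topology_def
  proof (rule topology_generated_by_Basis)
    have "V \<subseteq> Tset" unfolding V_def Tset_def by auto
    moreover have "open (tred -` V)" unfolding V_def tred_preimage by (intro open_UN) auto
    ultimately show "V \<in> {U. U \<subseteq> Tset \<and> open (tred -` U)}" by simp
  qed
  define SS where "SS = {{g \<in> fin_supp I. pairing g x = n} | x n. \<forall>i. i \<notin> I \<longrightarrow> x i = (0::int)}"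
  have top: "topspace (H_topology I) = fin_supp I"
  proof -
    have "fin_supp I \<in> SS" unfolding SS_def
      by (rule CollectI, rule exI[of _ "\<lambda>i. 0"], rule exI[of _ 0]) (auto simp: pairing_zero)
    then have "\<Union>SS = fin_supp I" unfolding SS_def by auto
    then show ?thesis unfolding H_topology_def SS_def by simp
  qed
  define U where "U = {g \<in> topspace (H_topology I). char_of t g \<in> V}"
  have "openin (H_topology I) U" unfolding U_def by (rule openin_continuous_map_preimage[OF cont]) fact
  then have gen: "generate_topology_on SS U" unfolding H_topology_def SS_def
    by (simp add: openin_topology_generated_by_iff)
  have z0: "(\<lambda>i. 0::int) \<in> fin_supp I" by (simp add: fin_supp_def)
  have "char_of t (\<lambda>i. 0) = 0" unfolding char_of_def using tred_int[of 0] by simp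
  then have "(\<lambda>i. 0::int) \<in> U" unfolding U_def V_def top using z0 by simp
  then obtain X where X: "finite X" "{g \<in> fin_supp I. \<forall>x\<in>X. pairing g x = pairing (\<lambda>i. 0) x} \<subseteq> U"
    using nbhd[OF gen _ SS_def] by blast
  from indep_claim[OF assms(4,5,7,8) X(1), of 2] obtain G S where S: "finite S" "card S = 2"
    and G: "\<forall>k\<in>S. G k \<in> fin_supp I \<and> (\<forall>x\<in>X. pairing (G k) x = 0)"
    and IG: "indep_fam t G S"
    by (elim exE conjE)
  obtain p q where pq: "S = {p, q}" "p \<noteq> q" using S(2) unfolding card_2_iff by blast
  have IG': "\<And>c. (\<Sum>k\<in>S. of_int (c k) * sv t (G k)) = 0 \<Longrightarrow> (\<forall>k\<in>S. c k = 0)"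
    using IG unfolding indep_fam_def by blast
  have "\<exists>k\<in>S. sv t (G k) \<notin> \<int>"
  proof (rule ccontr)
    assume "\<not> ?thesis"
    then have "sv t (G p) \<in> \<int>" "sv t (G q) \<in> \<int>" unfolding pq by simp_all
    then obtain zp zq where zp: "sv t (G p) = of_int zp" and zq: "sv t (G q) = of_int zq"
      by (auto elim!: Ints_cases)
    define c1 where "c1 k = (if k = q then 1 else 0::int)" for k
    have s1: "(\<Sum>k\<in>S. of_int (c1 k) * sv t (G k)) = sv t (G q)" unfolding pq using pq(2) by (simp add: c1_def)
    have "zq \<noteq> 0"
    proof
      assume "zq = 0"
      then have "\<forall>k\<in>S. c1 k = 0" using IG' s1 zq by simp
      then show False unfolding pq by (simp add: c1_def)
    qed
    define c2 where "c2 k = (if k = p then zq else - zp)" for k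
    have "(\<Sum>k\<in>S. of_int (c2 k) * sv t (G k)) = of_int zq * of_int zp + of_int (- zp) * of_int zq"
      unfolding pq using pq(2) zp zq by (simp add: c2_def)
    then have "(\<Sum>k\<in>S. of_int (c2 k) * sv t (G k)) = 0" by simp
    then have "\<forall>k\<in>S. c2 k = 0" by (rule IG')
    then have "c2 p = 0" unfolding pq by simp
    then show False using \<open>zq \<noteq> 0\<close> by (simp add: c2_def)
  qed
  then obtain k where k: "k \<in> S" "sv t (G k) \<notin> \<int>" by blast
  obtain m :: int where m: "\<not> \<bar>tred (of_int m * sv t (G k))\<bar> < 1/4" using exists_far[OF k(2)] by blast
  define g' where "g' = (\<lambda>i. m * G k i - 0 * G k i)"
  have Gk: "G k \<in> fin_supp I" using G k by blast
  have pg: "pairing g' x = m * pairing (G k) x - 0 * pairing (G k) x" for x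
    unfolding g'_def by (rule lin_comb(2)[OF Gk Gk])
  have "g' \<in> fin_supp I" unfolding g'_def by (rule lin_comb(1)[OF Gk Gk])
  moreover have "\<forall>x\<in>X. pairing g' x = pairing (\<lambda>i. 0) x"
    using G k by (simp add: pg pairing_zero)
  ultimately have "g' \<in> U" using X(2) by blast
  then have "char_of t g' \<in> V" unfolding U_def by blast
  moreover have "char_of t g' = tred (of_int m * sv t (G k))"
  proof -
    have "sv t g' = of_int m * sv t (G k) - of_int 0 * sv t (G k)"
      unfolding g'_def by (rule lin_comb(3)[OF Gk Gk])
    then show ?thesis unfolding char_of_sv by simp
  qed
  ultimately show False using m unfolding V_def by auto
qed

end
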